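(* Let $\mathcal{P}$ be a set of probability distributions on $\mathbb{N}$ with associated i.i.d. model class $\mathcal{P}^\infty$, let $\eta>0$ and $\Pi_0\in\mathbb{R}^+$. An insurer with initial capital $\Pi_0$ can find an insurance scheme $(\tau,\Pi)$ such that, for every $p\in\mathcal{P}^\infty$, the probability under $p$ that $(\tau,\Pi)$ never goes bankrupt is bigger than $1-\eta$, if and only if there is a loss domination scheme $\Phi$ such that for every $p\in\mathcal{P}^\infty$ the probability under $p$ that $\Phi$ goes bankrupt is less than $\eta$.
   Context: Losses $X_1,X_2,\ldots\in\mathbb{N}=\{0,1,2,\ldots\}$; $\mathcal{P}^\infty$ is the set of i.i.d. measures on $\mathbb{N}^\infty$ whose one-dimensional marginals form $\mathcal{P}$. $\mathbb{N}^*$ is the set of finite sequences over $\mathbb{N}$ (including the empty sequence), $x^n=x_1,\ldots,x_n$, $\mathbb{R}^+$ the nonnegative reals. An insurance scheme is a pair $(\tau,\Pi)$ with $\tau:\mathbb{N}^*\to\{0,1\}$ such that $\tau(x_1,\ldots,x_n)=1\Rightarrow\tau(x_1,\ldots,x_{n+1})=1$ and $p(\sup_n\tau(X^n)=1)=1$ for all $p\in\mathcal{P}^\infty$, and $\Pi:\mathbb{N}^*\to\mathbb{R}^+$ with $\Pi(x^n)=0$ when $\tau(x^n)=0$; it goes bankrupt if $\Pi_0+\sum_{i=1}^n(\Pi(X^{i-1})-X_i)\mathbf{1}(\tau(X^{i-1})=1)<0$ for some $n\ge1$. A loss domination scheme is a map $\Phi:\mathbb{N}^*\to\mathbb{R}^+\cup\{\infty\}$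 such that $\Phi(x_1,\ldots,x_n)<\infty\Rightarrow\Phi(x_1,\ldots,x_{n+1})<\infty$ for all $x^n$, and $p(\inf_{n\ge1}\Phi(X^n)<\infty)=1$ for all $p\in\mathcal{P}^\infty$. $\Phi$ goes bankrupt if $\Phi(X^{n-1})<X_n$ for some $n\ge1$. *)

theory Defs
  imports "HOL-Probability.Probability"
begin

text \<open>Sequences of losses are streams of naturals; the finite prefix x^n is stake n \<omega>,
  and X_{n+1} is \<omega> !! n. The i.i.d. measure with marginal p is stream_space (measure_pmf p).\<close>

definition iid :: "nat pmf \<Rightarrow> nat stream measure" where
  "iid p = stream_space (measure_pmf p)"

definition insurance_scheme ::
  "nat pmf set \<Rightarrow> (nat list \<Rightarrow> bool) \<Rightarrow> (nat list \<Rightarrow> real) \<Rightarrow> bool" where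
  "insurance_scheme P \<tau> Pr \<longleftrightarrow>
     (\<forall>xs x. \<tau> xs \<longrightarrow> \<tau> (xs @ [x])) \<and>
     (\<forall>p\<in>P. measure (iid p) {\<omega> \<in> space (iid p). \<exists>n. \<tau> (stake n \<omega>)} = 1) \<and>
     (\<forall>xs. Pr xs \<ge> 0) \<and>
     (\<forall>xs. \<not> \<tau> xs \<longrightarrow> Pr xs = 0)"

definition ins_bankrupt ::
  "real \<Rightarrow> (nat list \<Rightarrow> bool) \<Rightarrow> (nat list \<Rightarrow> real) \<Rightarrow> nat stream \<Rightarrow> bool" where
  "ins_bankrupt Pi0 \<tau> Pr \<omega> \<longleftrightarrow>
     (\<exists>n\<ge>1. Pi0 + (\<Sum>i<n. (Pr (stake i \<omega>) - real (\<omega> !! i)) *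
                         (if \<tau> (stake i \<omega>) then 1 else 0)) < 0)"

definition loss_domination_scheme ::
  "nat pmf set \<Rightarrow> (nat list \<Rightarrow> ennreal) \<Rightarrow> bool" where
  "loss_domination_scheme P \<Phi> \<longleftrightarrow>
     (\<forall>xs x. \<Phi> xs < \<infinity> \<longrightarrow> \<Phi> (xs @ [x]) < \<infinity>) \<and>
     (\<forall>p\<in>P. measure (iid p) {\<omega> \<in> space (iid p). \<exists>n\<ge>1. \<Phi> (stake n \<omega>) < \<infinity>} = 1)"

definition ld_bankrupt :: "(nat list \<Rightarrow> ennreal) \<Rightarrow> nat stream \<Rightarrow> bool" where
  "ld_bankrupt \<Phi> \<omega> \<longleftrightarrow> (\<exists>n. \<Phi> (stake n \<omega>) < of_nat (\<omega> !! n))"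

end

theory Submission imports Defs begin

lemma sets_iid: "sets (iid p) = sets (stream_space (count_space UNIV))"
  unfolding iid_def by (rule sets_stream_space_cong) simp

lemma space_iid: "space (iid p) = UNIV"
  unfolding iid_def by (simp add: space_stream_space)

lemma pred_stake: "Measurable.pred (stream_space (count_space UNIV)) (\<lambda>\<omega>::nat stream. g (stake n \<omega>))"
  by (rule measurable_compose[OF measurable_stake]) simp

lemma sets_ex_stake:
  "{\<omega> \<in> space (iid p). \<exists>n. g n (stake n \<omega>)} \<in> sets (iid p)"
proof -
  have "Measurable.pred (stream_space (count_space UNIV)) (\<lambda>\<omega>::nat stream. \<exists>n. g n (stake n \<omega>))"
    using pred_stake by measurable
  then show ?thesis unfolding sets_iid space_iid
    by (simp add: pred_def space_stream_space)
qed

lemma prob_iid: "prob_space (iid p)"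
  unfolding iid_def by (rule prob_space.prob_space_stream_space) (rule prob_space_measure_pmf)

definition capL :: "real \<Rightarrow> (nat list \<Rightarrow> bool) \<Rightarrow> (nat list \<Rightarrow> real) \<Rightarrow> nat list \<Rightarrow> real" where
  "capL Pi0 \<tau> Pr xs = Pi0 + (\<Sum>i<length xs. (Pr (take i xs) - real (xs ! i)) *
                         (if \<tau> (take i xs) then 1 else 0))"

lemma capL_stake: "capL Pi0 \<tau> Pr (stake n \<omega>) =
   Pi0 + (\<Sum>i<n. (Pr (stake i \<omega>) - real (\<omega> !! i)) * (if \<tau> (stake i \<omega>) then 1 else 0))"
  unfolding capL_def by (intro arg_cong2[where f="(+)"] refl sum.cong) (auto simp: take_stake)

lemma ins_bankrupt_alt: "ins_bankrupt Pi0 \<tau> Pr \<omega> \<longleftrightarrow> (\<exists>n. n \<ge> 1 \<and> capL Pi0 \<tau> Pr (stake n \<omega>) < 0)"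
  unfolding ins_bankrupt_def capL_stake by simp

lemma ld_bankrupt_alt: "ld_bankrupt \<Phi> \<omega> \<longleftrightarrow>
   (\<exists>n. (\<lambda>m xs. m \<ge> 1 \<and> \<Phi> (butlast xs) < of_nat (last xs)) n (stake n \<omega>))"
  unfolding ld_bankrupt_def
proof
  assume "\<exists>n. \<Phi> (stake n \<omega>) < of_nat (\<omega> !! n)"
  then obtain n where "\<Phi> (stake n \<omega>) < of_nat (\<omega> !! n)" by blast
  then show "\<exists>n. (\<lambda>m xs. m \<ge> 1 \<and> \<Phi> (butlast xs) < of_nat (last xs)) n (stake n \<omega>)"
    by (intro exI[of _ "Suc n"]) (simp add: stake_Suc del: stake.simps)
next
  assume "\<exists>n. (\<lambda>m xs. m \<ge> 1 \<and> \<Phi> (butlast xs) < of_nat (last xs)) n (stake n \<omega>)"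
  then obtain n where "n \<ge> 1" "\<Phi> (butlast (stake n \<omega>)) < of_nat (last (stake n \<omega>))" by auto
  then obtain m where "n = Suc m" "\<Phi> (stake m \<omega>) < of_nat (\<omega> !! m)"
    by (cases n) (auto simp: stake_Suc simp del: stake.simps)
  then show "\<exists>n. \<Phi> (stake n \<omega>) < of_nat (\<omega> !! n)" by blast
qed

lemma sets_ins: "{\<omega> \<in> space (iid p). ins_bankrupt Pi0 \<tau> Pr \<omega>} \<in> sets (iid p)"
  unfolding ins_bankrupt_alt by (rule sets_ex_stake)

lemma sets_ld: "{\<omega> \<in> space (iid p). ld_bankrupt \<Phi> \<omega>} \<in> sets (iid p)"
  unfolding ld_bankrupt_alt by (rule sets_ex_stake)

lemma compl_measure:
  assumes "{\<omega> \<in> space (iid p). Q \<omega>} \<in> sets (iid p)"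
  shows "measure (iid p) {\<omega> \<in> space (iid p). \<not> Q \<omega>} = 1 - measure (iid p) {\<omega> \<in> space (iid p). Q \<omega>}"
proof -
  interpret prob_space "iid p" by (rule prob_iid)
  have "{\<omega> \<in> space (iid p). \<not> Q \<omega>} = space (iid p) - {\<omega> \<in> space (iid p). Q \<omega>}" by auto
  then show ?thesis using prob_compl[OF assms] by simp
qed

lemma mono_measure:
  assumes "{\<omega> \<in> space (iid p). Q \<omega>} \<in> sets (iid p)" "\<And>\<omega>. R \<omega> \<Longrightarrow> Q \<omega>"
  shows "measure (iid p) {\<omega> \<in> space (iid p). R \<omega>} \<le> measure (iid p) {\<omega> \<in> space (iid p). Q \<omega>}"
proof -
  interpret prob_space "iid p" by (rule prob_iid)
  show ?thesis using assms by (intro finite_measure_mono) auto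
qed

theorem mainTheorem2:
  fixes P :: "nat pmf set" and \<eta> :: real and Pi0 :: real
  assumes "\<eta> > 0" and "Pi0 \<ge> 0"
  shows "(\<exists>\<tau> Pr. insurance_scheme P \<tau> Pr \<and>
            (\<forall>p\<in>P. measure (iid p) {\<omega> \<in> space (iid p). \<not> ins_bankrupt Pi0 \<tau> Pr \<omega>} > 1 - \<eta>))
     \<longleftrightarrow>
         (\<exists>\<Phi>. loss_domination_scheme P \<Phi> \<and>
            (\<forall>p\<in>P. measure (iid p) {\<omega> \<in> space (iid p). ld_bankrupt \<Phi> \<omega>} < \<eta>))"
proof
  assume "\<exists>\<tau> Pr. insurance_scheme P \<tau> Pr \<and>
            (\<forall>p\<in>P. measure (iid p) {\<omega> \<in> space (iid p). \<not> ins_bankrupt Pi0 \<tau> Pr \<omega>} > 1 - \<eta>)"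
  then obtain \<tau> Pr where ins: "insurance_scheme P \<tau> Pr"
    and pb: "\<And>p. p \<in> P \<Longrightarrow> measure (iid p) {\<omega> \<in> space (iid p). \<not> ins_bankrupt Pi0 \<tau> Pr \<omega>} > 1 - \<eta>"
    by blast
  define \<Phi> where "\<Phi> xs = (if \<tau> xs then ennreal (capL Pi0 \<tau> Pr xs + Pr xs) else \<infinity>)" for xs
  have tmono: "\<tau> xs \<Longrightarrow> \<tau> (xs @ [x])" for xs x using ins unfolding insurance_scheme_def by blast
  have fin: "\<Phi> xs < \<infinity> \<longleftrightarrow> \<tau> xs" for xs unfolding \<Phi>_def by auto
  have ev: "{\<omega> \<in> space (iid p). \<exists>n\<ge>1. \<Phi> (stake n \<omega>) < \<infinity>} = {\<omega> \<in> space (iid p). \<exists>n. \<tau> (stake n \<omega>)}" for p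
  proof -
    have "(\<exists>n\<ge>1. \<tau> (stake n \<omega>)) \<longleftrightarrow> (\<exists>n. \<tau> (stake n \<omega>))" for \<omega>
    proof
      assume "\<exists>n. \<tau> (stake n \<omega>)"
      then obtain n where "\<tau> (stake n \<omega>)" by blast
      then have "\<tau> (stake (Suc n) \<omega>)" by (simp add: stake_Suc tmono del: stake.simps)
      then show "\<exists>n\<ge>1. \<tau> (stake n \<omega>)" by (intro exI[of _ "Suc n"]) simp
    qed blast
    moreover have "(\<exists>n\<ge>1. \<Phi> (stake n \<omega>) < \<infinity>) \<longleftrightarrow> (\<exists>n\<ge>1. \<tau> (stake n \<omega>))" for \<omega>
      by (simp only: fin)
    ultimately show ?thesis by (simp only:)
  qed
  have lds: "loss_domination_scheme P \<Phi>"
  proof -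
    have a: "\<forall>xs x. \<Phi> xs < \<infinity> \<longrightarrow> \<Phi> (xs @ [x]) < \<infinity>"
      unfolding fin using tmono by blast
    have b: "\<forall>p\<in>P. measure (iid p) {\<omega> \<in> space (iid p). \<exists>n. \<tau> (stake n \<omega>)} = 1"
      using ins unfolding insurance_scheme_def by blast
    show ?thesis unfolding loss_domination_scheme_def ev using a b by blast
  qed
  have imp: "ld_bankrupt \<Phi> \<omega> \<Longrightarrow> ins_bankrupt Pi0 \<tau> Pr \<omega>" for \<omega>
  proof -
    assume "ld_bankrupt \<Phi> \<omega>"
    then obtain n where n: "\<Phi> (stake n \<omega>) < of_nat (\<omega> !! n)" unfolding ld_bankrupt_def by blast
    then have t: "\<tau> (stake n \<omega>)" unfolding \<Phi>_def by (auto split: if_splits)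
    with n have "ennreal (capL Pi0 \<tau> Pr (stake n \<omega>) + Pr (stake n \<omega>)) < ennreal (real (\<omega> !! n))"
      unfolding \<Phi>_def by (simp add: ennreal_of_nat_eq_real_of_nat)
    then have "capL Pi0 \<tau> Pr (stake n \<omega>) + Pr (stake n \<omega>) < real (\<omega> !! n)"
      by (metis ennreal_less_iff ennreal_neg less_le_not_le not_le of_nat_0_le_iff order_less_le_trans)
    then have "capL Pi0 \<tau> Pr (stake (Suc n) \<omega>) < 0" using t
      unfolding capL_stake by simp
    then show ?thesis unfolding ins_bankrupt_alt by (intro exI[of _ "Suc n"]) simp
  qed
  have "measure (iid p) {\<omega> \<in> space (iid p). ld_bankrupt \<Phi> \<omega>} < \<eta>" if "p \<in> P" for p
  proof -
    have "measure (iid p) {\<omega> \<in> space (iid p). ld_bankrupt \<Phi> \<omega>} \<le>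
          measure (iid p) {\<omega> \<in> space (iid p). ins_bankrupt Pi0 \<tau> Pr \<omega>}"
      by (rule mono_measure[OF sets_ins imp])
    also have "\<dots> = 1 - measure (iid p) {\<omega> \<in> space (iid p). \<not> ins_bankrupt Pi0 \<tau> Pr \<omega>}"
      using compl_measure[OF sets_ins] by simp
    also have "\<dots> < \<eta>" using pb[OF that] by simp
    finally show ?thesis .
  qed
  then show "\<exists>\<Phi>. loss_domination_scheme P \<Phi> \<and>
            (\<forall>p\<in>P. measure (iid p) {\<omega> \<in> space (iid p). ld_bankrupt \<Phi> \<omega>} < \<eta>)"
    using lds by blast
next
  assume "\<exists>\<Phi>. loss_domination_scheme P \<Phi> \<and>
            (\<forall>p\<in>P. measure (iid p) {\<omega> \<in> space (iid p). ld_bankrupt \<Phi> \<omega>} < \<eta>)"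
  then obtain \<Phi> where lds: "loss_domination_scheme P \<Phi>"
    and pb: "\<And>p. p \<in> P \<Longrightarrow> measure (iid p) {\<omega> \<in> space (iid p). ld_bankrupt \<Phi> \<omega>} < \<eta>"
    by blast
  define \<tau> where "\<tau> xs = (\<Phi> xs < \<infinity>)" for xs
  define Pr where "Pr xs = (if \<tau> xs then enn2real (\<Phi> xs) else 0)" for xs
  have ev: "{\<omega> \<in> space (iid p). \<exists>n. \<tau> (stake n \<omega>)} = {\<omega> \<in> space (iid p). \<exists>n\<ge>1. \<Phi> (stake n \<omega>) < \<infinity>}" for p
  proof -
    have "(\<exists>n\<ge>1. \<Phi> (stake n \<omega>) < \<infinity>) \<longleftrightarrow> (\<exists>n. \<Phi> (stake n \<omega>) < \<infinity>)" for \<omega>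
    proof
      assume "\<exists>n. \<Phi> (stake n \<omega>) < \<infinity>"
      then obtain n where "\<Phi> (stake n \<omega>) < \<infinity>" by blast
      then have "\<Phi> (stake (Suc n) \<omega>) < \<infinity>" using lds
        by (simp add: stake_Suc loss_domination_scheme_def del: stake.simps)
      then show "\<exists>n\<ge>1. \<Phi> (stake n \<omega>) < \<infinity>" by (intro exI[of _ "Suc n"]) simp
    qed blast
    then show ?thesis by (simp add: \<tau>_def)
  qed
  have ins: "insurance_scheme P \<tau> Pr"
    unfolding insurance_scheme_def ev using lds
    by (auto simp: \<tau>_def Pr_def loss_domination_scheme_def)
  have imp: "\<not> ld_bankrupt \<Phi> \<omega> \<Longrightarrow> \<not> ins_bankrupt Pi0 \<tau> Pr \<omega>" for \<omega>
  proof -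
    assume nb: "\<not> ld_bankrupt \<Phi> \<omega>"
    have "capL Pi0 \<tau> Pr (stake n \<omega>) \<ge> 0" for n
    proof (induction n)
      case 0 then show ?case using assms(2) by (simp add: capL_def)
    next
      case (Suc n)
      have ge: "\<Phi> (stake n \<omega>) \<ge> of_nat (\<omega> !! n)" using nb unfolding ld_bankrupt_def by (simp add: not_less)
      have "(Pr (stake n \<omega>) - real (\<omega> !! n)) * (if \<tau> (stake n \<omega>) then 1 else 0) \<ge> 0"
      proof (cases "\<tau> (stake n \<omega>)")
        case True
        then have "enn2real (\<Phi> (stake n \<omega>)) \<ge> real (\<omega> !! n)" using ge unfolding \<tau>_def
          by (metis enn2real_mono enn2real_of_nat infinity_ennreal_def)
        then show ?thesis using True by (simp add: Pr_def)
      qed simp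
      then show ?case using Suc.IH unfolding capL_stake by simp
    qed
    then show ?thesis unfolding ins_bankrupt_alt by (simp add: not_less)
  qed
  have "measure (iid p) {\<omega> \<in> space (iid p). \<not> ins_bankrupt Pi0 \<tau> Pr \<omega>} > 1 - \<eta>" if "p \<in> P" for p
  proof -
    have "1 - \<eta> < 1 - measure (iid p) {\<omega> \<in> space (iid p). ld_bankrupt \<Phi> \<omega>}"
      using pb[OF that] by simp
    also have "\<dots> = measure (iid p) {\<omega> \<in> space (iid p). \<not> ld_bankrupt \<Phi> \<omega>}"
      using compl_measure[OF sets_ld] by simp
    also have "\<dots> \<le> measure (iid p) {\<omega> \<in> space (iid p). \<not> ins_bankrupt Pi0 \<tau> Pr \<omega>}"
      by (rule mono_measure[OF _ imp]) (use sets_ins compl_measure in \<open>auto\<close>)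
    finally show ?thesis .
  qed
  then show "\<exists>\<tau> Pr. insurance_scheme P \<tau> Pr \<and>
            (\<forall>p\<in>P. measure (iid p) {\<omega> \<in> space (iid p). \<not> ins_bankrupt Pi0 \<tau> Pr \<omega>} > 1 - \<eta>)"
    using ins by blast
qed

end
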